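(* Let $X$ be a real Hilbert space, let $U,V$ be closed affine subspaces of $X$, let $T:=T_{U,V}$, $v:=P_{\overline{\operatorname{ran}}(\mathrm{Id}-T)}0$, and assume $v\in\operatorname{ran}(\mathrm{Id}-T)$. Then: (i) $T$ is affine and $T=\mathrm{Id}-P_U-P_V+2P_VP_U$; (ii) $v\in(\operatorname{par}U)^\perp\cap(\operatorname{par}V)^\perp$; (iii) for all $x\in X$, $\alpha\in\mathbb R$: $P_Ux=P_U(x+\alpha v)$; (iv) for all $x\in X$, $\alpha\in\mathbb R$: $P_Vx=P_V(x+\alpha v)$; (v) $T_{-v}=v+T=T_{(N_U,N_V(\cdot-v))}=T_{U,v+V}$; (vi) $Z_v=U\cap(v+V)$; (vii) $K_v=(\operatorname{par}U)^\perp\cap(\operatorname{par}V)^\perp$; (viii) $\operatorname{Fix}(T_{-v})=\operatorname{Fix}(v+T)=Z_v+K_v=(U\cap(v+V))+((\operatorname{par}U)^\perp\cap(\operatorname{par}V)^\perp)$.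
   Context: For nonempty closed convex $U,V$, $T_{U,V}:=\mathrm{Id}-P_U+P_V(2P_U-\mathrm{Id})$ is the Douglas–Rachford operator $T_{(N_U,N_V)}$, where for maximally monotone $A,B$, $T_{(A,B)}:=\mathrm{Id}-J_A+J_B(2J_A-\mathrm{Id})$ with $J_A=(\mathrm{Id}+A)^{-1}$. Here $v=P_{\overline{U-V}}0$. $\operatorname{par}U:=U-U$. $T_{-v}x:=T(x+v)$, $(v+T)x:=v+Tx$. For $C^\vee:=(-\mathrm{Id})\circ C\circ(-\mathrm{Id})$ and $C^{-\vee}:=(C^{-1})^\vee$, with $A=N_U$, $B=N_V$: $Z_v:=((-v+A)+B(\cdot-v))^{-1}(0)$ (normal solutions) and $K_v:=((-v+A)^{-1}+(B(\cdot-v))^{-\vee})^{-1}(0)$ (dual normal solutions). *)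

theory Defs
  imports "HOL-Analysis.Analysis"
begin

text \<open>Metric projection onto a set (in a real Hilbert space, onto a nonempty closed
convex set the nearest point exists and is unique).\<close>
definition proj :: "'a::real_inner set \<Rightarrow> 'a \<Rightarrow> 'a" where
  "proj S x = (SOME p. p \<in> S \<and> (\<forall>y\<in>S. dist x p \<le> dist x y))"

type_synonym 'a opr = "'a \<Rightarrow> 'a set"

definition normal_cone :: "'a::real_inner set \<Rightarrow> 'a opr" where
  "normal_cone C x = (if x \<in> C then {u. \<forall>c\<in>C. inner u (c - x) \<le> 0} else {})"

definition op_inv :: "'a opr \<Rightarrow> 'a opr" where
  "op_inv A y = {x. y \<in> A x}"

definition op_sum :: "'a::ab_group_add opr \<Rightarrow> 'a opr \<Rightarrow> 'a opr" where
  "op_sum A B x = {a + b | a b. a \<in> A x \<and> b \<in> B x}"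

definition op_trans :: "'a::ab_group_add \<Rightarrow> 'a opr \<Rightarrow> 'a opr" where
  "op_trans w A x = (\<lambda>a. w + a) ` A x"

definition op_shift :: "'a opr \<Rightarrow> 'a::ab_group_add \<Rightarrow> 'a opr" where
  "op_shift A w x = A (x - w)"

definition op_vee :: "'a::ab_group_add opr \<Rightarrow> 'a opr" where
  "op_vee C x = uminus ` C (- x)"

text \<open>Resolvent J_A = (Id + A)^{-1}, single-valued for maximally monotone A.\<close>
definition resolvent :: "'a::real_vector opr \<Rightarrow> 'a \<Rightarrow> 'a" where
  "resolvent A x = (THE y. x - y \<in> A y)"

definition DR_op :: "'a::real_vector opr \<Rightarrow> 'a opr \<Rightarrow> 'a \<Rightarrow> 'a" where
  "DR_op A B x = x - resolvent A x + resolvent B (2 *\<^sub>R resolvent A x - x)"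

definition DR :: "'a::real_inner set \<Rightarrow> 'a set \<Rightarrow> 'a \<Rightarrow> 'a" where
  "DR U V x = x - proj U x + proj V (2 *\<^sub>R proj U x - x)"

definition par :: "'a::ab_group_add set \<Rightarrow> 'a set" where
  "par U = {a - b | a b. a \<in> U \<and> b \<in> U}"

definition affine_map :: "('a::real_vector \<Rightarrow> 'b::real_vector) \<Rightarrow> bool" where
  "affine_map f \<longleftrightarrow> (\<forall>x y t. f ((1 - t) *\<^sub>R x + t *\<^sub>R y) = (1 - t) *\<^sub>R f x + t *\<^sub>R f y)"

definition Fix :: "('a \<Rightarrow> 'a) \<Rightarrow> 'a set" where
  "Fix f = {x. f x = x}"

definition Zsol :: "'a::ab_group_add opr \<Rightarrow> 'a opr \<Rightarrow> 'a \<Rightarrow> 'a set" where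
  "Zsol A B w = op_inv (op_sum (op_trans (- w) A) (op_shift B w)) 0"

definition Ksol :: "'a::ab_group_add opr \<Rightarrow> 'a opr \<Rightarrow> 'a \<Rightarrow> 'a set" where
  "Ksol A B w = op_inv (op_sum (op_inv (op_trans (- w) A)) (op_vee (op_inv (op_shift B w)))) 0"

end

theory Submission
  imports Defs
begin


lemma proj_exists_min:
  fixes S :: "'a::{real_inner,complete_space} set"
  assumes "S \<noteq> {}" "closed S" "convex S"
  shows "\<exists>p\<in>S. \<forall>y\<in>S. dist x p \<le> dist x y"
proof -
  define f where "f y = (dist x y)^2" for y
  define d where "d = Inf (f ` S)"
  have bdd: "bdd_below (f ` S)" by (auto simp: f_def bdd_below_def intro!: exI[of _ 0])
  have dle: "d \<le> f y" if "y \<in> S" for y using that bdd by (simp add: d_def cInf_lower)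
  have "\<exists>y\<in>S. f y < d + inverse (real (Suc n))" for n
  proof -
    have "Inf (f ` S) < d + inverse (real (Suc n))" by (simp add: d_def)
    then show ?thesis using cInf_less_iff[of "f ` S"] assms(1) bdd by auto
  qed
  then obtain y where yS: "\<And>n. y n \<in> S" and yd: "\<And>n. f (y n) < d + inverse (real (Suc n))" by metis
  have key: "(norm (y n - y m))^2 \<le> 2*inverse (real (Suc n)) + 2*inverse(real (Suc m))" for n m
  proof -
    define a where "a = x - y n"
    define b where "b = x - y m"
    have par: "(norm (a - b))^2 + (norm (a + b))^2 = 2*(norm a)^2 + 2*(norm b)^2"
      by (simp add: power2_norm_eq_inner inner_simps inner_commute)
    have "a + b = 2 *\<^sub>R (x - ((1/2) *\<^sub>R y n + (1/2) *\<^sub>R y m))" by (simp add: a_def b_def algebra_simps scaleR_2)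
    then have "(norm (a + b))^2 = 4 * f ((1/2) *\<^sub>R y n + (1/2) *\<^sub>R y m)"
      by (simp add: f_def dist_norm power_mult_distrib)
    moreover have "(1/2) *\<^sub>R y n + (1/2) *\<^sub>R y m \<in> S" using convexD[OF assms(3) yS yS] by simp
    ultimately have "4*d \<le> (norm (a + b))^2" using dle by auto
    moreover have "(norm (a - b))^2 = (norm (y n - y m))^2" by (simp add: a_def b_def norm_minus_commute)
    moreover have "(norm a)^2 = f (y n)" "(norm b)^2 = f (y m)" by (simp_all add: a_def b_def f_def dist_norm)
    ultimately show ?thesis using par yd[of n] yd[of m] by linarith
  qed
  have "Cauchy y"
  proof (rule metric_CauchyI)
    fix e :: real assume "e > 0"
    then have "e^2/4 > 0" by simp
    then obtain N where N: "N > 0" "inverse (real N) < e^2/4" using ex_inverse_of_nat_less by blast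
    show "\<exists>M. \<forall>m\<ge>M. \<forall>n\<ge>M. dist (y m) (y n) < e"
    proof (intro exI allI impI)
      fix m n assume mn: "N \<le> m" "N \<le> n"
      have "inverse (real (Suc m)) \<le> inverse (real N)" "inverse (real (Suc n)) \<le> inverse (real N)"
        using mn N by (auto intro!: le_imp_inverse_le)
      moreover have "(dist (y m) (y n))^2 \<le> 2*inverse(real(Suc m)) + 2*inverse(real(Suc n))"
        using key[of m n] by (simp add: dist_norm)
      ultimately have "(dist (y m) (y n))^2 < e^2" using N(2) by linarith
      then show "dist (y m) (y n) < e" using \<open>e > 0\<close> by (simp add: power_less_imp_less_base)
    qed
  qed
  then obtain p where lim: "y \<longlonglongrightarrow> p" using Cauchy_convergent convergent_def by blast
  have pS: "p \<in> S" using closed_sequentially[OF assms(2)] yS lim by blast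
  have "(\<lambda>n. f (y n)) \<longlonglongrightarrow> f p" unfolding f_def by (intro tendsto_intros lim)
  moreover have "(\<lambda>n. d + inverse (real (Suc n))) \<longlonglongrightarrow> d + 0"
    by (intro tendsto_intros LIMSEQ_inverse_real_of_nat)
  ultimately have "f p \<le> d" using yd by (intro LIMSEQ_le) (auto intro: less_imp_le)
  have "dist x p \<le> dist x c" if "c \<in> S" for c
  proof -
    have "(dist x p)^2 \<le> (dist x c)^2" using \<open>f p \<le> d\<close> dle[OF that] unfolding f_def by linarith
    then show ?thesis by (rule power2_le_imp_le) simp
  qed
  then show ?thesis using pS by blast
qed

lemma norm_sq_diff_scale:
  fixes w z :: "'a::real_inner"
  shows "(norm (w - t *\<^sub>R z))^2 = (norm w)^2 - 2 * t * inner w z + t^2 * inner z z"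
  unfolding power2_norm_eq_inner by (simp add: inner_diff_left inner_diff_right inner_commute power2_eq_square algebra_simps)

lemma proj_VI:
  fixes S :: "'a::{real_inner,complete_space} set"
  assumes "S \<noteq> {}" "closed S" "convex S"
  shows "proj S x \<in> S \<and> (\<forall>c\<in>S. inner (x - proj S x) (c - proj S x) \<le> 0)"
proof -
  have ex: "\<exists>p. p \<in> S \<and> (\<forall>y\<in>S. dist x p \<le> dist x y)" using proj_exists_min[OF assms] by blast
  define p where "p = proj S x"
  have p: "p \<in> S" "\<forall>y\<in>S. dist x p \<le> dist x y" using someI_ex[OF ex] by (simp_all add: p_def proj_def)
  have "inner (x - p) (c - p) \<le> 0" if c: "c \<in> S" for c
  proof (rule ccontr)
    define a where "a = inner (x - p) (c - p)"
    define b where "b = inner (c - p) (c - p)"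
    assume "\<not> ?thesis"
    then have a: "a > 0" by (simp add: a_def)
    have "c \<noteq> p" using a by (auto simp: a_def)
    then have b: "b > 0" by (simp add: b_def)
    define t where "t = min 1 (a / b)"
    have t: "0 < t" "t \<le> 1" "t \<le> a / b" using a b by (auto simp: t_def)
    have "p + t *\<^sub>R (c - p) \<in> S" using convexD[OF assms(3) p(1) c, of "1 - t" t] t
      by (simp add: algebra_simps)
    then have "dist x p \<le> dist x (p + t *\<^sub>R (c - p))" using p by blast
    then have "(norm (x - p))^2 \<le> (norm ((x - p) - t *\<^sub>R (c - p)))^2"
      by (simp add: dist_norm algebra_simps power_mono)
    also have "\<dots> = (norm (x - p))^2 - 2 * t * a + t^2 * b"
      unfolding a_def b_def by (rule norm_sq_diff_scale)
    finally have "t * (t * b) \<ge> t * (2 * a)" by (simp add: power2_eq_square algebra_simps)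
    then have "t * b \<ge> 2 * a" using t by simp
    moreover have "t * b \<le> a" using t b by (simp add: pos_le_divide_eq mult.commute)
    ultimately show False using a by linarith
  qed
  then show ?thesis using p by (simp add: p_def)
qed

lemma proj_unique:
  fixes S :: "'a::{real_inner,complete_space} set"
  assumes "S \<noteq> {}" "closed S" "convex S"
    and "y \<in> S" "\<forall>c\<in>S. inner (x - y) (c - y) \<le> 0"
  shows "proj S x = y"
proof -
  note P = proj_VI[OF assms(1-3), of x]
  define p where "p = proj S x"
  have 1: "inner (x - p) (y - p) \<le> 0" using P assms(4) by (simp add: p_def)
  have 2: "inner (x - y) (p - y) \<le> 0" using P assms(5) by (simp add: p_def)
  have "inner (y - p) (y - p) = inner (x - p) (y - p) + inner (x - y) (p - y)"
    by (simp add: inner_simps inner_commute algebra_simps)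
  then have "inner (y - p) (y - p) \<le> 0" using 1 2 by linarith
  then have "inner (y - p) (y - p) = 0" using inner_ge_zero[of "y - p"] by linarith
  then show ?thesis by (simp add: p_def)
qed



lemma par_memI: "a \<in> S \<Longrightarrow> b \<in> S \<Longrightarrow> a - b \<in> par S"
  by (auto simp: par_def)

lemma affine_refl2: "affine S \<Longrightarrow> p \<in> S \<Longrightarrow> c \<in> S \<Longrightarrow> 2 *\<^sub>R p - c \<in> S"
proof -
  assume "affine S" "p \<in> S" "c \<in> S"
  then have "2 *\<^sub>R p + (-1) *\<^sub>R c \<in> S" using affine_def[THEN iffD1, rule_format, of S p c 2 "-1"] by simp
  then show ?thesis by simp
qed

lemma projA:
  fixes S :: "'a::{real_inner,complete_space} set"
  assumes "S \<noteq> {}" "closed S" "affine S"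
  shows "proj S x \<in> S \<and> (\<forall>c\<in>S. inner (x - proj S x) (c - proj S x) = 0)"
proof -
  note P = proj_VI[OF assms(1,2) affine_imp_convex[OF assms(3)], of x]
  have "inner (x - proj S x) (c - proj S x) = 0" if c: "c \<in> S" for c
  proof -
    have "2 *\<^sub>R proj S x - c \<in> S" using affine_refl2[OF assms(3)] P c by blast
    then have "inner (x - proj S x) ((2 *\<^sub>R proj S x - c) - proj S x) \<le> 0" using P by blast
    moreover have "(2 *\<^sub>R proj S x - c) - proj S x = - (c - proj S x)" by (simp add: algebra_simps scaleR_2)
    moreover have "inner (x - proj S x) (- (c - proj S x)) = - inner (x - proj S x) (c - proj S x)"
      by (rule inner_minus_right)
    ultimately show ?thesis using P c by fastforce
  qed
  then show ?thesis using P by blast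
qed

lemma projA_unique:
  fixes S :: "'a::{real_inner,complete_space} set"
  assumes "S \<noteq> {}" "closed S" "affine S" "y \<in> S" "\<forall>c\<in>S. inner (x - y) (c - y) = 0"
  shows "proj S x = y"
  using proj_unique[OF assms(1,2) affine_imp_convex[OF assms(3)] assms(4)] assms(5) by simp

lemma projA_par:
  fixes S :: "'a::{real_inner,complete_space} set"
  assumes "S \<noteq> {}" "closed S" "affine S" "l \<in> par S"
  shows "inner (x - proj S x) l = 0"
proof -
  obtain a b where l: "l = a - b" "a \<in> S" "b \<in> S" using assms(4) by (auto simp: par_def)
  have e: "l = (a - proj S x) - (b - proj S x)" using l by simp
  have "inner (x - proj S x) (a - proj S x) = 0" "inner (x - proj S x) (b - proj S x) = 0"
    using projA[OF assms(1-3), of x] l by blast+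
  then show ?thesis unfolding e inner_diff_right by simp
qed

lemma projA_affine:
  fixes S :: "'a::{real_inner,complete_space} set"
  assumes "S \<noteq> {}" "closed S" "affine S"
  shows "proj S ((1 - t) *\<^sub>R x + t *\<^sub>R y) = (1 - t) *\<^sub>R proj S x + t *\<^sub>R proj S y"
proof (rule projA_unique[OF assms])
  note Px = projA[OF assms, of x] and Py = projA[OF assms, of y]
  show pS: "(1 - t) *\<^sub>R proj S x + t *\<^sub>R proj S y \<in> S"
    using Px Py affine_def[THEN iffD1, rule_format, of S "proj S x" "proj S y" "1-t" t] assms(3) by simp
  show "\<forall>c\<in>S. inner ((1 - t) *\<^sub>R x + t *\<^sub>R y - ((1 - t) *\<^sub>R proj S x + t *\<^sub>R proj S y))
                 (c - ((1 - t) *\<^sub>R proj S x + t *\<^sub>R proj S y)) = 0"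
  proof
    fix c assume c: "c \<in> S"
    define p where "p = (1 - t) *\<^sub>R proj S x + t *\<^sub>R proj S y"
    have "c - p \<in> par S" using c pS by (simp add: par_memI p_def)
    then have 1: "inner (x - proj S x) (c - p) = 0" "inner (y - proj S y) (c - p) = 0"
      using projA_par[OF assms] by blast+
    have "(1 - t) *\<^sub>R x + t *\<^sub>R y - p = (1 - t) *\<^sub>R (x - proj S x) + t *\<^sub>R (y - proj S y)"
      by (simp add: p_def algebra_simps)
    then show "inner ((1 - t) *\<^sub>R x + t *\<^sub>R y - p) (c - p) = 0"
      using 1 by (simp add: inner_add_left)
  qed
qed

lemma projA_shift:
  fixes S :: "'a::{real_inner,complete_space} set"
  assumes "S \<noteq> {}" "closed S" "affine S" "\<forall>l\<in>par S. inner w l = 0"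
  shows "proj S (x + w) = proj S x"
proof (rule projA_unique[OF assms(1-3)])
  note P = projA[OF assms(1-3), of x]
  show "proj S x \<in> S" using P by blast
  show "\<forall>c\<in>S. inner (x + w - proj S x) (c - proj S x) = 0"
  proof
    fix c assume c: "c \<in> S"
    have "c - proj S x \<in> par S" using c P by (simp add: par_memI)
    then have "inner w (c - proj S x) = 0" using assms(4) by blast
    moreover have "x + w - proj S x = (x - proj S x) + w" by simp
    ultimately show "inner (x + w - proj S x) (c - proj S x) = 0"
      using P c by (simp only: inner_add_left)
  qed
qed

lemma mem_transl: fixes z :: "'a::ab_group_add" shows "z \<in> (\<lambda>y. w + y) ` S \<longleftrightarrow> z - w \<in> S"
proof
  assume "z \<in> (\<lambda>y. w + y) ` S"
  then obtain x where "x \<in> S" "z = w + x" by blast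
  then show "z - w \<in> S" by simp
next
  assume "z - w \<in> S"
  moreover have "z = w + (z - w)" by simp
  ultimately show "z \<in> (\<lambda>y. w + y) ` S" by (rule rev_image_eqI)
qed

lemma transl_props:
  fixes S :: "'a::{real_inner,complete_space} set"
  assumes "S \<noteq> {}" "closed S" "affine S"
  shows "(\<lambda>y. w + y) ` S \<noteq> {}" "closed ((\<lambda>y. w + y) ` S)" "affine ((\<lambda>y. w + y) ` S)"
  using assms closed_translation[of S w] affine_translation[of S w] by auto

lemma projA_trans:
  fixes S :: "'a::{real_inner,complete_space} set"
  assumes "S \<noteq> {}" "closed S" "affine S"
  shows "proj ((\<lambda>y. w + y) ` S) z = w + proj S (z - w)"
proof (rule projA_unique[OF transl_props[OF assms]])
  note P = projA[OF assms, of "z - w"]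
  show "w + proj S (z - w) \<in> (\<lambda>y. w + y) ` S" using P by (simp add: mem_transl)
  show "\<forall>c\<in>(\<lambda>y. w + y) ` S. inner (z - (w + proj S (z - w))) (c - (w + proj S (z - w))) = 0"
    using P by (auto simp: algebra_simps)
qed

lemma normal_cone_affine:
  fixes S :: "'a::{real_inner} set"
  assumes "affine S"
  shows "u \<in> normal_cone S a \<longleftrightarrow> a \<in> S \<and> (\<forall>l\<in>par S. inner u l = 0)"
proof
  assume h: "u \<in> normal_cone S a"
  then have a: "a \<in> S" and le: "\<forall>c\<in>S. inner u (c - a) \<le> 0" by (auto simp: normal_cone_def split: if_splits)
  have eq: "inner u (c - a) = 0" if "c \<in> S" for c
  proof -
    have "2 *\<^sub>R a - c \<in> S" using affine_refl2[OF assms a that] .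
    then have "inner u ((2 *\<^sub>R a - c) - a) \<le> 0" using le by blast
    moreover have "(2 *\<^sub>R a - c) - a = - (c - a)" by (simp add: algebra_simps scaleR_2)
    moreover have "inner u (- (c - a)) = - inner u (c - a)" by (rule inner_minus_right)
    ultimately show ?thesis using le that by fastforce
  qed
  have "inner u l = 0" if lp: "l \<in> par S" for l
  proof -
    obtain p q where l: "l = p - q" "p \<in> S" "q \<in> S" using lp by (auto simp: par_def)
    have e: "l = (p - a) - (q - a)" using l by simp
    have "inner u (p - a) = 0" "inner u (q - a) = 0" using eq l by blast+
    then show ?thesis unfolding e inner_diff_right by simp
  qed
  then show "a \<in> S \<and> (\<forall>l\<in>par S. inner u l = 0)" using a by blast
next
  assume "a \<in> S \<and> (\<forall>l\<in>par S. inner u l = 0)"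
  then show "u \<in> normal_cone S a" by (auto simp: normal_cone_def par_memI)
qed

lemma resolvent_normal_cone:
  fixes S :: "'a::{real_inner,complete_space} set"
  assumes "S \<noteq> {}" "closed S" "convex S"
  shows "resolvent (normal_cone S) = proj S"
proof
  fix x
  note P = proj_VI[OF assms, of x]
  show "resolvent (normal_cone S) x = proj S x"
    unfolding resolvent_def
  proof (rule the_equality)
    show "x - proj S x \<in> normal_cone S (proj S x)" using P by (simp add: normal_cone_def)
    fix y assume "x - y \<in> normal_cone S y"
    then have "y \<in> S" "\<forall>c\<in>S. inner (x - y) (c - y) \<le> 0" by (auto simp: normal_cone_def split: if_splits)
    then show "y = proj S x" using proj_unique[OF assms] by metis
  qed
qed

lemma shift_normal_cone:
  "op_shift (normal_cone S) w = normal_cone ((\<lambda>y. w + y) ` S)"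
proof
  fix y
  have "(\<forall>c\<in>S. inner u (c - (y - w)) \<le> 0) \<longleftrightarrow> (\<forall>c\<in>(\<lambda>y. w + y) ` S. inner u (c - y) \<le> 0)" for u
    by (auto simp: algebra_simps)
  then show "op_shift (normal_cone S) w y = normal_cone ((\<lambda>y. w + y) ` S) y"
    by (simp add: op_shift_def normal_cone_def mem_transl)
qed

lemma affine_map_refl: "affine_map f \<Longrightarrow> f (2 *\<^sub>R a - b) = 2 *\<^sub>R f a - f b"
  unfolding affine_map_def by (drule spec[of _ a], drule spec[of _ b], drule spec[of _ "-1"]) (simp add: algebra_simps)

lemma affine_map_line: "affine_map f \<Longrightarrow> f ((1 - t) *\<^sub>R a + t *\<^sub>R b) = (1 - t) *\<^sub>R f a + t *\<^sub>R f b"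
  unfolding affine_map_def by blast

lemma affine_map_convex: "affine_map f \<Longrightarrow> convex (range f)"
  unfolding convex_alt
proof (clarsimp)
  fix x y and u :: real assume f: "affine_map f"
  show "(1 - u) *\<^sub>R f x + u *\<^sub>R f y \<in> range f"
    using affine_map_line[OF f, of u x y, symmetric] by blast
qed



lemma orth_iff: "y \<in> orthogonal_comp W \<longleftrightarrow> (\<forall>l\<in>W. inner l y = 0)"
  by (simp add: orthogonal_comp_def orthogonal_def)

theorem proposition4p3:
  fixes U V :: "'a::{real_inner, complete_space} set"
    and v :: 'a
  assumes "U \<noteq> {}" "closed U" "affine U"
    and "V \<noteq> {}" "closed V" "affine V"
    and v_def: "v = proj (closure (range (\<lambda>x. x - DR U V x))) 0"
    and v_ran: "v \<in> range (\<lambda>x. x - DR U V x)"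
  shows "affine_map (DR U V) \<and>
           DR U V = (\<lambda>x. x - proj U x - proj V x + 2 *\<^sub>R proj V (proj U x)) \<and>
         v \<in> orthogonal_comp (par U) \<inter> orthogonal_comp (par V) \<and>
         (\<forall>x (\<alpha>::real). proj U x = proj U (x + \<alpha> *\<^sub>R v)) \<and>
         (\<forall>x (\<alpha>::real). proj V x = proj V (x + \<alpha> *\<^sub>R v)) \<and>
         (\<lambda>x. DR U V (x + v)) = (\<lambda>x. v + DR U V x) \<and>
         (\<lambda>x. v + DR U V x) = DR_op (normal_cone U) (op_shift (normal_cone V) v) \<and>
         DR_op (normal_cone U) (op_shift (normal_cone V) v) = DR U ((\<lambda>y. v + y) ` V) \<and>
         Zsol (normal_cone U) (normal_cone V) v = U \<inter> ((\<lambda>y. v + y) ` V) \<and>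
         Ksol (normal_cone U) (normal_cone V) v = orthogonal_comp (par U) \<inter> orthogonal_comp (par V) \<and>
         Fix (\<lambda>x. DR U V (x + v)) = Fix (\<lambda>x. v + DR U V x) \<and>
         Fix (\<lambda>x. v + DR U V x) =
           {z + k | z k. z \<in> Zsol (normal_cone U) (normal_cone V) v \<and>
                         k \<in> Ksol (normal_cone U) (normal_cone V) v} \<and>
         {z + k | z k. z \<in> Zsol (normal_cone U) (normal_cone V) v \<and>
                       k \<in> Ksol (normal_cone U) (normal_cone V) v} =
           {z + k | z k. z \<in> U \<inter> ((\<lambda>y. v + y) ` V) \<and>
                         k \<in> orthogonal_comp (par U) \<inter> orthogonal_comp (par V)}"
proof -
  note cU = assms(1-3) and cV = assms(4-6)
  have PU: "proj U x \<in> U" for x using projA[OF cU] by blast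
  have PV: "proj V x \<in> V" for x using projA[OF cV] by blast
  have PUpar: "inner (x - proj U x) l = 0" if "l \<in> par U" for x l using projA_par[OF cU that] .
  have PVpar: "inner (x - proj V x) l = 0" if "l \<in> par V" for x l using projA_par[OF cV that] .
  have PUaff: "proj U ((1 - t) *\<^sub>R x + t *\<^sub>R y) = (1 - t) *\<^sub>R proj U x + t *\<^sub>R proj U y" for t x y
    by (rule projA_affine[OF cU])
  have PVaff: "proj V ((1 - t) *\<^sub>R x + t *\<^sub>R y) = (1 - t) *\<^sub>R proj V x + t *\<^sub>R proj V y" for t x y
    by (rule projA_affine[OF cV])
  have refl: "proj V (2 *\<^sub>R proj U x - x) = 2 *\<^sub>R proj V (proj U x) - proj V x" for x
    using PVaff[of "-1" "proj U x" x] by simp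
  have Tform: "DR U V = (\<lambda>x. x - proj U x - proj V x + 2 *\<^sub>R proj V (proj U x))"
    by (rule ext) (simp add: DR_def refl algebra_simps)
  have Taff: "affine_map (DR U V)"
    unfolding affine_map_def
  proof (intro allI)
    fix x y and t :: real
    have 1: "proj V (proj U ((1 - t) *\<^sub>R x + t *\<^sub>R y)) = (1 - t) *\<^sub>R proj V (proj U x) + t *\<^sub>R proj V (proj U y)"
      by (simp only: PUaff PVaff)
    show "DR U V ((1 - t) *\<^sub>R x + t *\<^sub>R y) = (1 - t) *\<^sub>R DR U V x + t *\<^sub>R DR U V y"
      unfolding Tform by (simp only: 1 PUaff PVaff) (simp add: algebra_simps)
  qed
  define F where "F x = x - DR U V x" for x
  have Feq: "(\<lambda>x. x - DR U V x) = F" by (simp add: F_def fun_eq_iff)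
  have Fform: "F x = proj U x + proj V x - 2 *\<^sub>R proj V (proj U x)" for x by (simp add: F_def Tform)
  have Fform2: "F x = proj U x - proj V (2 *\<^sub>R proj U x - x)" for x by (simp add: F_def DR_def)
  have Faff: "affine_map F"
    unfolding affine_map_def
  proof (intro allI)
    fix x y and t :: real
    show "F ((1 - t) *\<^sub>R x + t *\<^sub>R y) = (1 - t) *\<^sub>R F x + t *\<^sub>R F y"
      unfolding F_def affine_map_line[OF Taff] by (simp add: algebra_simps)
  qed
  obtain x0 where x0: "v = F x0" using v_ran Feq by auto
  have VI: "\<forall>c\<in>closure (range F). inner (0 - v) (c - v) \<le> 0"
  proof -
    have "closure (range F) \<noteq> {}" by simp
    moreover have "convex (closure (range F))" by (rule convex_closure[OF affine_map_convex[OF Faff]])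
    ultimately have "\<forall>c\<in>closure (range F). inner (0 - proj (closure (range F)) 0) (c - proj (closure (range F)) 0) \<le> 0"
      using proj_VI[of "closure (range F)" 0] by simp
    moreover have "v = proj (closure (range F)) 0" using v_def unfolding Feq .
    ultimately show ?thesis by simp
  qed
  have orthR: "inner v (F y - v) = 0" for y
  proof -
    have "F y \<in> closure (range F)" "F (2 *\<^sub>R x0 - y) \<in> closure (range F)"
      using closure_subset[of "range F"] by (auto intro: rangeI)
    then have 1: "inner (0 - v) (F y - v) \<le> 0" and 2: "inner (0 - v) (F (2 *\<^sub>R x0 - y) - v) \<le> 0"
      using VI by blast+
    have r: "F (2 *\<^sub>R x0 - y) = 2 *\<^sub>R v - F y" using affine_map_refl[OF Faff, of x0 y] x0 by simp
    have "F (2 *\<^sub>R x0 - y) - v = v - F y" unfolding r by (simp add: scaleR_2)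
    then have 3: "inner (0 - v) (F (2 *\<^sub>R x0 - y) - v) = inner v (F y - v)"
      by (simp add: inner_diff_right)
    have 4: "inner (0 - v) (F y - v) = - inner v (F y - v)" by simp
    show ?thesis using 1 2 3 4 by linarith
  qed
  define a where "a = proj U (x0 + v) - proj U x0"
  define c where "c = proj V (x0 + v) - proj V x0"
  define e where "e = proj V (proj U (x0 + v)) - proj V (proj U x0)"
  have aL: "a \<in> par U" unfolding a_def by (rule par_memI[OF PU PU])
  have cM: "c \<in> par V" unfolding c_def by (rule par_memI[OF PV PV])
  have eM: "e \<in> par V" unfolding e_def by (rule par_memI[OF PV PV])
  have va: "inner (v - a) l = 0" if "l \<in> par U" for l
  proof -
    have eq: "v - a = (x0 + v - proj U (x0 + v)) - (x0 - proj U x0)" by (simp add: a_def algebra_simps)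
    have "inner (v - a) l = inner (x0 + v - proj U (x0 + v)) l - inner (x0 - proj U x0) l"
      unfolding eq by (rule inner_diff_left)
    then show ?thesis using PUpar[OF that, of "x0 + v"] PUpar[OF that, of x0] by simp
  qed
  have vc: "inner (v - c) l = 0" if "l \<in> par V" for l
  proof -
    have eq: "v - c = (x0 + v - proj V (x0 + v)) - (x0 - proj V x0)" by (simp add: c_def algebra_simps)
    have "inner (v - c) l = inner (x0 + v - proj V (x0 + v)) l - inner (x0 - proj V x0) l"
      unfolding eq by (rule inner_diff_left)
    then show ?thesis using PVpar[OF that, of "x0 + v"] PVpar[OF that, of x0] by simp
  qed
  have ae: "inner (a - e) l = 0" if "l \<in> par V" for l
  proof -
    have eq: "a - e = (proj U (x0 + v) - proj V (proj U (x0 + v))) - (proj U x0 - proj V (proj U x0))"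
      by (simp add: a_def e_def algebra_simps)
    have "inner (a - e) l = inner (proj U (x0 + v) - proj V (proj U (x0 + v))) l - inner (proj U x0 - proj V (proj U x0)) l"
      unfolding eq by (rule inner_diff_left)
    then show ?thesis using PVpar[OF that, of "proj U (x0 + v)"] PVpar[OF that, of "proj U x0"] by simp
  qed
  have Fd: "F (x0 + v) - F x0 = a + c - 2 *\<^sub>R e" by (simp add: Fform a_def c_def e_def algebra_simps)
  have i0: "inner v (a + c - 2 *\<^sub>R e) = 0" using orthR[of "x0 + v"] x0 Fd by simp
  have i1: "inner v a = inner a a" using va[OF aL] by (simp add: inner_diff_left)
  have i2: "inner v c = inner c c" using vc[OF cM] by (simp add: inner_diff_left)
  have i3: "inner v e = inner c e" using vc[OF eM] by (simp add: inner_diff_left)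
  have i4: "inner a c = inner e c" using ae[OF cM] by (simp add: inner_diff_left)
  have "inner (a - c) (a - c) = inner v (a + c - 2 *\<^sub>R e)"
    using i1 i2 i3 i4 by (simp add: inner_diff_left inner_diff_right inner_add_right inner_commute)
  then have "inner (a - c) (a - c) = 0" using i0 by simp
  then have ac: "a = c" by simp
  have aM: "a \<in> par V" using ac cM by simp
  have vw: "v = (x0 - proj U x0) + ((2 *\<^sub>R proj U x0 - x0) - proj V (2 *\<^sub>R proj U x0 - x0))"
    using x0 Fform2[of x0] by (simp add: algebra_simps scaleR_2)
  have "inner v a = inner (x0 - proj U x0) a + inner ((2 *\<^sub>R proj U x0 - x0) - proj V (2 *\<^sub>R proj U x0 - x0)) a"
    by (subst vw) (rule inner_add_left)
  then have "inner v a = 0"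
    using PUpar[OF aL, of x0] PVpar[OF aM, of "2 *\<^sub>R proj U x0 - x0"] by simp
  then have a0: "a = 0" using i1 by simp
  have c0: "c = 0" using a0 ac by simp
  have vU: "inner v l = 0" if "l \<in> par U" for l using va[OF that] a0 by simp
  have vV: "inner v l = 0" if "l \<in> par V" for l using vc[OF that] c0 by simp
  have vorth: "v \<in> orthogonal_comp (par U) \<inter> orthogonal_comp (par V)"
    using vU vV by (simp add: orth_iff inner_commute)
  have shU: "proj U (x + \<alpha> *\<^sub>R v) = proj U x" for x and \<alpha> :: real
    by (rule projA_shift[OF cU]) (simp add: vU)
  have shV: "proj V (x + \<alpha> *\<^sub>R v) = proj V x" for x and \<alpha> :: real
    by (rule projA_shift[OF cV]) (simp add: vV)
  have shU1: "proj U (x + v) = proj U x" for x using shU[of x 1] by simp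
  have shVm: "proj V (x - v) = proj V x" for x using shV[of x "-1"] by simp
  have part5a: "(\<lambda>x. DR U V (x + v)) = (\<lambda>x. v + DR U V x)"
  proof
    fix x
    have h2: "proj V (2 *\<^sub>R proj U x - (x + v)) = proj V (2 *\<^sub>R proj U x - x)"
      using shVm[of "2 *\<^sub>R proj U x - x"] unfolding diff_diff_eq .
    have "DR U V (x + v) = (x + v) - proj U x + proj V (2 *\<^sub>R proj U x - x)"
      unfolding DR_def shU1 h2 ..
    then show "DR U V (x + v) = v + DR U V x" by (simp add: DR_def algebra_simps)
  qed
  note V'props = transl_props[OF cV, of v]
  have resU: "resolvent (normal_cone U) = proj U"
    by (rule resolvent_normal_cone[OF cU(1,2) affine_imp_convex[OF cU(3)]])
  have resV': "resolvent (op_shift (normal_cone V) v) = proj ((\<lambda>y. v + y) ` V)"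
    unfolding shift_normal_cone
    by (rule resolvent_normal_cone[OF V'props(1,2) affine_imp_convex[OF V'props(3)]])
  have pV': "proj ((\<lambda>y. v + y) ` V) z = v + proj V z" for z
    using projA_trans[OF cV, of v z] shVm by simp
  have part5b: "(\<lambda>x. v + DR U V x) = DR_op (normal_cone U) (op_shift (normal_cone V) v)"
    by (rule ext) (unfold DR_op_def DR_def resU resV' pV', simp add: algebra_simps)
  have part5c: "DR_op (normal_cone U) (op_shift (normal_cone V) v) = DR U ((\<lambda>y. v + y) ` V)"
    by (rule ext) (simp only: DR_op_def DR_def resU resV')
  have NU: "u \<in> normal_cone U p \<longleftrightarrow> p \<in> U \<and> (\<forall>l\<in>par U. inner u l = 0)" for u p
    by (rule normal_cone_affine[OF cU(3)])
  have NV: "u \<in> normal_cone V p \<longleftrightarrow> p \<in> V \<and> (\<forall>l\<in>par V. inner u l = 0)" for u p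
    by (rule normal_cone_affine[OF cV(3)])
  have Zeq: "Zsol (normal_cone U) (normal_cone V) v = U \<inter> ((\<lambda>y. v + y) ` V)"
  proof (intro set_eqI iffI)
    fix x assume "x \<in> Zsol (normal_cone U) (normal_cone V) v"
    then obtain a' b where "a' \<in> normal_cone U x" "b \<in> normal_cone V (x - v)"
      by (auto simp: Zsol_def op_inv_def op_sum_def op_trans_def op_shift_def)
    then show "x \<in> U \<inter> ((\<lambda>y. v + y) ` V)" by (simp add: NU NV mem_transl)
  next
    fix x assume "x \<in> U \<inter> ((\<lambda>y. v + y) ` V)"
    then have x: "x \<in> U" "x - v \<in> V" by (auto simp: mem_transl)
    have "0 \<in> normal_cone U x" using x NU by simp
    moreover have "v \<in> normal_cone V (x - v)" using x NV vV by simp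
    ultimately have "(0::'a) = (- v + 0) + v \<and> (- v + 0) \<in> (\<lambda>a. - v + a) ` normal_cone U x \<and> v \<in> normal_cone V (x - v)"
      by simp
    then show "x \<in> Zsol (normal_cone U) (normal_cone V) v"
      unfolding Zsol_def op_inv_def op_sum_def op_trans_def op_shift_def by blast
  qed
  have Kmem: "y \<in> Ksol (normal_cone U) (normal_cone V) v \<longleftrightarrow>
      (\<exists>p. y + v \<in> normal_cone U p \<and> - y \<in> normal_cone V (p - v))" for y
  proof -
    have "y \<in> Ksol (normal_cone U) (normal_cone V) v \<longleftrightarrow>
       (\<exists>p b. 0 = p + b \<and> y \<in> (\<lambda>a. - v + a) ` normal_cone U p \<and> b \<in> uminus ` {x. - y \<in> normal_cone V (x - v)})"
      by (auto simp: Ksol_def op_inv_def op_sum_def op_trans_def op_shift_def op_vee_def)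
    also have "\<dots> \<longleftrightarrow> (\<exists>p. y + v \<in> normal_cone U p \<and> - y \<in> normal_cone V (p - v))"
    proof
      assume "\<exists>p b. 0 = p + b \<and> y \<in> (\<lambda>a. - v + a) ` normal_cone U p \<and> b \<in> uminus ` {x. - y \<in> normal_cone V (x - v)}"
      then obtain p b where pb: "0 = p + b" "y \<in> (\<lambda>a. - v + a) ` normal_cone U p" "b \<in> uminus ` {x. - y \<in> normal_cone V (x - v)}"
        by blast
      from pb(3) obtain q where q: "b = - q" "- y \<in> normal_cone V (q - v)" by blast
      have "q = p" using pb(1) q(1) by (simp add: eq_neg_iff_add_eq_0 add.commute)
      moreover have "y + v \<in> normal_cone U p" using pb(2) mem_transl[of y "- v"] by simp
      ultimately show "\<exists>p. y + v \<in> normal_cone U p \<and> - y \<in> normal_cone V (p - v)" using q by blast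
    next
      assume "\<exists>p. y + v \<in> normal_cone U p \<and> - y \<in> normal_cone V (p - v)"
      then obtain p where p: "y + v \<in> normal_cone U p" "- y \<in> normal_cone V (p - v)" by blast
      have "y \<in> (\<lambda>a. - v + a) ` normal_cone U p" using p(1) mem_transl[of y "- v"] by simp
      moreover have "- p \<in> uminus ` {x. - y \<in> normal_cone V (x - v)}" using p(2) by blast
      moreover have "(0::'a) = p + - p" by simp
      ultimately show "\<exists>p b. 0 = p + b \<and> y \<in> (\<lambda>a. - v + a) ` normal_cone U p \<and> b \<in> uminus ` {x. - y \<in> normal_cone V (x - v)}"
        by blast
    qed
    finally show ?thesis .
  qed
  have Keq: "Ksol (normal_cone U) (normal_cone V) v = orthogonal_comp (par U) \<inter> orthogonal_comp (par V)"
  proof (intro set_eqI iffI)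
    fix y assume "y \<in> Ksol (normal_cone U) (normal_cone V) v"
    then obtain p where p: "y + v \<in> normal_cone U p" "- y \<in> normal_cone V (p - v)" using Kmem by blast
    have "inner y l = 0" if "l \<in> par U" for l
    proof -
      have "inner (y + v) l = 0" using p(1) NU that by blast
      then show ?thesis using vU[OF that] by (simp add: inner_add_left)
    qed
    moreover have "inner y l = 0" if "l \<in> par V" for l
      using p(2) NV that by fastforce
    ultimately show "y \<in> orthogonal_comp (par U) \<inter> orthogonal_comp (par V)"
      by (simp add: orth_iff inner_commute)
  next
    fix y assume "y \<in> orthogonal_comp (par U) \<inter> orthogonal_comp (par V)"
    then have yU: "\<forall>l\<in>par U. inner y l = 0" and yV: "\<forall>l\<in>par V. inner y l = 0"
      by (simp_all add: orth_iff inner_commute)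
    define p where "p = proj U x0"
    have pU: "p \<in> U" by (simp add: p_def PU)
    have "p - v = proj V (2 *\<^sub>R proj U x0 - x0)" using x0 Fform2[of x0] by (simp add: p_def)
    then have pV: "p - v \<in> V" using PV by simp
    have "y + v \<in> normal_cone U p" using pU yU vU NU by (simp add: inner_add_left)
    moreover have "- y \<in> normal_cone V (p - v)" using pV yV NV by simp
    ultimately show "y \<in> Ksol (normal_cone U) (normal_cone V) v" using Kmem by blast
  qed
  have FixEq: "Fix (\<lambda>x. v + DR U V x) =
      {z + k | z k. z \<in> U \<inter> ((\<lambda>y. v + y) ` V) \<and> k \<in> orthogonal_comp (par U) \<inter> orthogonal_comp (par V)}"
  proof (intro set_eqI iffI)
    fix x assume "x \<in> Fix (\<lambda>x. v + DR U V x)"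
    then have fx: "v + DR U V x = x" by (simp add: Fix_def)
    define z where "z = proj U x"
    define k where "k = x - z"
    have pv: "proj V (2 *\<^sub>R z - x) = z - v" using fx by (simp add: DR_def z_def algebra_simps)
    have zU: "z \<in> U" by (simp add: z_def PU)
    have zV: "z - v \<in> V" using PV[of "2 *\<^sub>R z - x"] pv by simp
    have kU: "inner k l = 0" if "l \<in> par U" for l using PUpar[OF that, of x] by (simp add: k_def z_def)
    have kV: "inner k l = 0" if "l \<in> par V" for l
    proof -
      have "(2 *\<^sub>R z - x) - proj V (2 *\<^sub>R z - x) = v - k" using pv by (simp add: k_def algebra_simps scaleR_2)
      then have "inner (v - k) l = 0" using PVpar[OF that, of "2 *\<^sub>R z - x"] by simp
      then show ?thesis using vV[OF that] by (simp add: inner_diff_left)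
    qed
    have "x = z + k" by (simp add: k_def)
    moreover have "z \<in> U \<inter> ((\<lambda>y. v + y) ` V)" using zU zV by (simp add: mem_transl)
    moreover have "k \<in> orthogonal_comp (par U) \<inter> orthogonal_comp (par V)"
      using kU kV by (simp add: orth_iff inner_commute)
    ultimately show "x \<in> {z + k | z k. z \<in> U \<inter> ((\<lambda>y. v + y) ` V) \<and> k \<in> orthogonal_comp (par U) \<inter> orthogonal_comp (par V)}"
      by blast
  next
    fix x assume "x \<in> {z + k | z k. z \<in> U \<inter> ((\<lambda>y. v + y) ` V) \<and> k \<in> orthogonal_comp (par U) \<inter> orthogonal_comp (par V)}"
    then obtain z k where x: "x = z + k" and zU: "z \<in> U" and zV: "z - v \<in> V"
      and kU: "\<forall>l\<in>par U. inner k l = 0" and kV: "\<forall>l\<in>par V. inner k l = 0"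
      by (auto simp: mem_transl orth_iff inner_commute)
    have pu: "proj U x = z"
    proof (rule projA_unique[OF cU zU], intro ballI)
      fix c assume "c \<in> U"
      then have "c - z \<in> par U" using zU by (rule par_memI)
      then show "inner (x - z) (c - z) = 0" using kU x by simp
    qed
    have pvz: "proj V (z - k) = z - v"
    proof (rule projA_unique[OF cV zV], intro ballI)
      fix c assume "c \<in> V"
      then have m: "c - (z - v) \<in> par V" using zV by (rule par_memI)
      have "z - k - (z - v) = v - k" by simp
      then show "inner (z - k - (z - v)) (c - (z - v)) = 0"
        using kV m vV[OF m] by (simp add: inner_diff_left)
    qed
    have h: "2 *\<^sub>R z - x = z - k" by (simp add: x scaleR_2)
    have "DR U V x = x - z + (z - v)" by (simp only: DR_def pu h pvz)
    then have "v + DR U V x = x" by simp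
    then show "x \<in> Fix (\<lambda>x. v + DR U V x)" by (simp add: Fix_def)
  qed
  have A: "\<forall>x (\<alpha>::real). proj U x = proj U (x + \<alpha> *\<^sub>R v)" using shU by simp
  have B: "\<forall>x (\<alpha>::real). proj V x = proj V (x + \<alpha> *\<^sub>R v)" using shV by simp
  have FF: "Fix (\<lambda>x. DR U V (x + v)) = Fix (\<lambda>x. v + DR U V x)" by (simp only: part5a)
  show ?thesis unfolding Zeq Keq
    using Taff Tform vorth A B part5a part5b part5c FF FixEq by blast
qed

end
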